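(* Suppose $c'(t)<0$ and $c''(t)\ge0$ for all $t\in[0,1]$. Then there exists $\hat s_S\in(0,\tilde s)$ such that $$EU_S^F(\hat s_S)>\max\{EU_S^D,EU_S^E\},$$ where $EU_S^D=EU_S^F(1)$ and $EU_S^E=EU_S^F(0)$.
   Context: Model: $n\ge2$ bidders with i.i.d. values on $[0,1]$, twice differentiable CDF $F$, density $f$. Write $G=F^{n-1}$, $g=G'$, and $h(v,x)=n(n-1)f(v)f(x)F^{n-2}(x)$. Time cost: $c:[0,1]\to\mathbb{R}_+$, twice differentiable, with $c(0)=1$ and $c'>-1$. A winner with value $v$ paying $p$ after duration $t$ gets $c(t)v-p$; the auctioneer gets $p$. Istanbul Flower Auction with starting price $s\in[0,1]$: - Bidders with value $v\ge p(s)$ (equilibrium cutoff $p(s)\in[s,1]$) bid at $s$. An English phase among them ascends from $s$ (duration $p-s$), each staying until $m(v,s)$ with $c(m(v,s)-s)v-m(v,s)=0$; a sole initial bidder buys at $s$. - If nobody bids, a Dutch phase descends from $s$ (duration $s-p$). A bidder with value $v<p(s)$ bids $b(v,s)$, the strictly increasing solution of $\partial_v b=\frac{g(v)}{G(v)}\frac{c(s-b)v-b}{1+c'(s-b)v}$ with $b(0,s)=0$. When $p(s)<1$, $b(p(s),s)=s$. The threshold $\tilde s\in(0,1)$ is such that $p(s)<1$ with $p$ increasing on $[0,\tilde s)$, and $p(s)=1$ on $[\tilde s,1]$. Expected social welfare (auctioneer's utility plus the sum of bidders' utilities) is $$EU_S^F(s)=\int_0^{p(s)}c(s-b(v,s))v\,dF^n(v)+\int_{p(s)}^1\Big(\int_0^{p(s)}v\,h(v,x)\,dx+\int_{p(s)}^v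 c(m(x,s)-s)v\,h(v,x)\,dx\Big)dv.$$ *)

theory Defs
  imports "HOL-Analysis.Analysis"
begin

text \<open>Istanbul Flower Auction model. F is the common CDF on [0,1], f its density,
  n the number of bidders.\<close>

definition G_fn :: "nat \<Rightarrow> (real \<Rightarrow> real) \<Rightarrow> real \<Rightarrow> real" where
  "G_fn n F v = F v ^ (n - 1)"

definition g_fn :: "nat \<Rightarrow> (real \<Rightarrow> real) \<Rightarrow> (real \<Rightarrow> real) \<Rightarrow> real \<Rightarrow> real" where
  "g_fn n F f v = real (n - 1) * F v ^ (n - 2) * f v"

definition h_fn :: "nat \<Rightarrow> (real \<Rightarrow> real) \<Rightarrow> (real \<Rightarrow> real) \<Rightarrow> real \<Rightarrow> real \<Rightarrow> real" where
  "h_fn n F f v x = real n * real (n - 1) * f v * f x * F x ^ (n - 2)"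

text \<open>Expected social welfare of the Istanbul Flower Auction with starting price s.
  b v s: Dutch-phase bid, m v s: English-phase drop-out price, p s: cutoff.
  The Stieltjes measure dF^n(v) is written with its density n F(v)^(n-1) f(v).\<close>

definition EU_S_F ::
  "nat \<Rightarrow> (real \<Rightarrow> real) \<Rightarrow> (real \<Rightarrow> real) \<Rightarrow> (real \<Rightarrow> real) \<Rightarrow>
   (real \<Rightarrow> real \<Rightarrow> real) \<Rightarrow> (real \<Rightarrow> real \<Rightarrow> real) \<Rightarrow> (real \<Rightarrow> real) \<Rightarrow> real \<Rightarrow> real" where
  "EU_S_F n F f c b m p s =
     integral {0..p s} (\<lambda>v. c (s - b v s) * v * (real n * F v ^ (n - 1) * f v))
   + integral {p s..1} (\<lambda>v.
        integral {0..p s} (\<lambda>x. v * h_fn n F f v x)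
      + integral {p s..v} (\<lambda>x. c (m x s - s) * v * h_fn n F f v x))"

end

theory Submission
  imports Defs
begin


lemma deriv_interior:
  assumes "(g has_real_derivative D) (at x within {a..b})" "a < x" "x < b"
  shows "(g has_real_derivative D) (at x)"
proof -
  have sub: "{a<..<b} \<subseteq> {a..b}" by auto
  have "(g has_real_derivative D) (at x within {a<..<b})"
    by (rule has_field_derivative_subset[OF assms(1) sub])
  moreover have "at x within {a<..<b} = at x" using assms(2,3) by (intro at_within_open) auto
  ultimately show ?thesis by simp
qed

lemma cont_from_deriv:
  assumes "\<And>x. x \<in> {a..b} \<Longrightarrow> (g has_real_derivative g' x) (at x within {a..b})"
  shows "continuous_on {a..b} g"
  using assms by (meson DERIV_continuous continuous_on_eq_continuous_within)

lemma mono_from_deriv: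
  assumes "\<And>x. x \<in> {a..b} \<Longrightarrow> (g has_real_derivative g' x) (at x within {a..b})"
    and "\<And>x. a < x \<Longrightarrow> x < b \<Longrightarrow> g' x \<ge> 0"
    and "a \<le> x" "x \<le> y" "y \<le> b"
  shows "g x \<le> g y"
proof (rule DERIV_nonneg_imp_increasing_open[OF \<open>x \<le> y\<close>])
  fix z assume "x < z" "z < y"
  then show "\<exists>y. DERIV g z :> y \<and> 0 \<le> y"
    using assms deriv_interior[OF assms(1)[of z]] by (intro exI[of _ "g' z"]) auto
next
  have "continuous_on {a..b} g" using cont_from_deriv assms(1) by blast
  thus "continuous_on {x..y} g" by (rule continuous_on_subset) (use assms(3,4,5) in auto)
qed

lemma smono_from_deriv:
  assumes "\<And>x. x \<in> {a..b} \<Longrightarrow> (g has_real_derivative g' x) (at x within {a..b})"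
    and "\<And>x. a < x \<Longrightarrow> x < b \<Longrightarrow> g' x > 0"
    and "a \<le> x" "x < y" "y \<le> b"
  shows "g x < g y"
proof -
  have c0: "continuous_on {a..b} g" using cont_from_deriv assms(1) by blast
  have sub: "{x..y} \<subseteq> {a..b}" using assms(3,5) by auto
  have cont: "continuous_on {x..y} g" using continuous_on_subset[OF c0 sub] .
  have der: "\<exists>d. DERIV g z :> d \<and> 0 < d" if "x < z" "z < y" for z
  proof -
    have "a < z" "z < b" "z \<in> {a..b}" using that assms(3,5) by auto
    thus ?thesis using deriv_interior[OF assms(1)[of z]] assms(2)[of z] by blast
  qed
  show ?thesis using DERIV_pos_imp_increasing_open[OF assms(4) der cont] by blast
qed

lemma integrable_mono_times_cont:
  fixes g k :: "real \<Rightarrow> real"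
  assumes "mono_on {a..b} g" "continuous_on {a..b} k"
  shows "(\<lambda>x. g x * k x) integrable_on {a..b}"
proof -
  have "space lborel = space lebesgue" "sets borel \<subseteq> sets lebesgue"
    by force+
  then have meas: "g \<in> borel_measurable (lebesgue_on {a..b})"
    by (metis assms(1) borel_measurable_mono_on_fnc borel_measurable_subalgebra mono_restrict_space space_lborel space_restrict_space)
  have bdd: "bounded (g ` {a..b})"
  proof -
    have "norm (g x) \<le> \<bar>g a\<bar> + \<bar>g b\<bar>" if "x \<in> {a..b}" for x
    proof -
      have "g a \<le> g x" "g x \<le> g b" using that assms(1) by (auto intro: mono_onD)
      thus ?thesis by simp
    qed
    thus ?thesis unfolding bounded_iff by blast
  qed
  have "k absolutely_integrable_on {a..b}"
    using assms(2) absolutely_integrable_continuous_real by blast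
  hence "(\<lambda>x. g x * k x) absolutely_integrable_on {a..b}"
    using absolutely_integrable_bounded_measurable_product_real[OF meas _ bdd] by auto
  thus ?thesis using absolutely_integrable_on_def by blast
qed

lemma integrable_antimono_times_cont:
  fixes g k :: "real \<Rightarrow> real"
  assumes "\<And>x y. x \<in> {a..b} \<Longrightarrow> y \<in> {a..b} \<Longrightarrow> x \<le> y \<Longrightarrow> g y \<le> g x" "continuous_on {a..b} k"
  shows "(\<lambda>x. g x * k x) integrable_on {a..b}"
proof -
  have "mono_on {a..b} (\<lambda>x. - g x)" using assms(1) unfolding mono_on_def by auto
  from integrable_mono_times_cont[OF this assms(2)]
  have "(\<lambda>x. - (g x * k x)) integrable_on {a..b}" by simp
  thus ?thesis using integrable_neg by fastforce
qed






locale IFA =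
  fixes n :: nat
    and F f f' :: "real \<Rightarrow> real"
    and c c' c'' :: "real \<Rightarrow> real"
    and b m :: "real \<Rightarrow> real \<Rightarrow> real"
    and p :: "real \<Rightarrow> real"
    and st :: real
  assumes n2: "n \<ge> 2"
    and F0: "F 0 = 0" and F1: "F 1 = 1"
    and F_mono: "mono_on {0..1} F"
    and f_nonneg: "\<And>x. x \<in> {0..1} \<Longrightarrow> f x \<ge> 0"
    and F_deriv: "\<And>x. x \<in> {0..1} \<Longrightarrow> (F has_real_derivative f x) (at x within {0..1})"
    and f_deriv: "\<And>x. x \<in> {0..1} \<Longrightarrow> (f has_real_derivative f' x) (at x within {0..1})"
    and c_nonneg: "\<And>t. t \<in> {0..1} \<Longrightarrow> c t \<ge> 0"
    and c_deriv: "\<And>t. t \<in> {0..1} \<Longrightarrow> (c has_real_derivative c' t) (at t within {0..1})"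
    and c'_deriv: "\<And>t. t \<in> {0..1} \<Longrightarrow> (c' has_real_derivative c'' t) (at t within {0..1})"
    and c0: "c 0 = 1"
    and c'_gt: "\<And>t. t \<in> {0..1} \<Longrightarrow> c' t > -1"
    and p_range: "\<And>s. s \<in> {0..1} \<Longrightarrow> s \<le> p s \<and> p s \<le> 1"
    and m_range: "\<And>s v. s \<in> {0..1} \<Longrightarrow> v \<in> {p s..1} \<Longrightarrow> s \<le> m v s \<and> m v s - s \<le> 1"
    and m_eq: "\<And>s v. s \<in> {0..1} \<Longrightarrow> v \<in> {p s..1} \<Longrightarrow> c (m v s - s) * v - m v s = 0"
    and b_cont: "\<And>s. s \<in> {0..1} \<Longrightarrow> continuous_on {0..p s} (\<lambda>v. b v s)"
    and b_strict: "\<And>s. s \<in> {0..1} \<Longrightarrow> strict_mono_on {0..p s} (\<lambda>v. b v s)"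
    and b_zero: "\<And>s. s \<in> {0..1} \<Longrightarrow> b 0 s = 0"
    and b_le: "\<And>s v. s \<in> {0..1} \<Longrightarrow> v \<in> {0..p s} \<Longrightarrow> b v s \<le> s"
    and b_ode: "\<And>s v. s \<in> {0..1} \<Longrightarrow> v \<in> {0<..<p s} \<Longrightarrow>
       ((\<lambda>w. b w s) has_real_derivative
          (g_fn n F f v / G_fn n F v) * ((c (s - b v s) * v - b v s) / (1 + c' (s - b v s) * v)))
       (at v)"
    and b_cut: "\<And>s. s \<in> {0..1} \<Longrightarrow> p s < 1 \<Longrightarrow> b (p s) s = s"
    and st: "0 < st" "st < 1"
    and p_lt: "\<And>s. s \<in> {0..<st} \<Longrightarrow> p s < 1"
    and p_mono: "mono_on {0..<st} p"
    and p_one: "\<And>s. s \<in> {st..1} \<Longrightarrow> p s = 1"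
    and c'_neg: "\<And>t. t \<in> {0..1} \<Longrightarrow> c' t < 0"
    and c''_nonneg: "\<And>t. t \<in> {0..1} \<Longrightarrow> c'' t \<ge> 0"
begin

lemma c_cont: "continuous_on {0..1} c" using cont_from_deriv c_deriv by blast
lemma c'_cont: "continuous_on {0..1} c'" using cont_from_deriv c'_deriv by blast
lemma F_cont: "continuous_on {0..1} F" using cont_from_deriv F_deriv by blast
lemma f_cont: "continuous_on {0..1} f" using cont_from_deriv f_deriv by blast

lemma c_strict: "0 \<le> x \<Longrightarrow> x < y \<Longrightarrow> y \<le> 1 \<Longrightarrow> c y < c x"
proof -
  assume a: "0 \<le> x" "x < y" "y \<le> 1"
  have "(\<lambda>t. - c t) x < (\<lambda>t. - c t) y"
    by (rule smono_from_deriv[where g'="\<lambda>t. - c' t" and a=0 and b=1])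
       (use a c'_neg in \<open>auto intro!: derivative_eq_intros c_deriv\<close>)
  thus ?thesis by simp
qed

lemma c_anti: "0 \<le> x \<Longrightarrow> x \<le> y \<Longrightarrow> y \<le> 1 \<Longrightarrow> c y \<le> c x"
  using c_strict by (cases "x = y") force+

lemma c'_ge: "0 \<le> t \<Longrightarrow> t \<le> 1 \<Longrightarrow> 0 \<le> c' t + 1"
  using c'_gt[of t] by auto

lemma c_id_mono: "0 \<le> x \<Longrightarrow> x \<le> y \<Longrightarrow> y \<le> 1 \<Longrightarrow> c x + x \<le> c y + y"
  by (rule mono_from_deriv[where g="\<lambda>t. c t + t" and g'="\<lambda>t. c' t + 1" and a=0 and b=1])
     (use c'_ge in \<open>auto intro!: derivative_eq_intros c_deriv\<close>)

lemma c'_mono: "0 \<le> x \<Longrightarrow> x \<le> y \<Longrightarrow> y \<le> 1 \<Longrightarrow> c' x \<le> c' y"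
  by (rule mono_from_deriv[where g="c'" and g'="c''" and a=0 and b=1])
     (use c''_nonneg c'_deriv in auto)

lemma c_le1: "0 \<le> t \<Longrightarrow> t \<le> 1 \<Longrightarrow> c t \<le> 1"
  using c_anti[of 0 t] c0 by auto

lemma c_ge: "0 \<le> t \<Longrightarrow> t \<le> 1 \<Longrightarrow> 1 - t \<le> c t"
  using c_id_mono[of 0 t] c0 by auto

lemma D_pos: "0 \<le> t \<Longrightarrow> t \<le> 1 \<Longrightarrow> 0 \<le> v \<Longrightarrow> v \<le> 1 \<Longrightarrow> 0 < 1 + c' t * v"
proof -
  assume a: "0 \<le> t" "t \<le> 1" "0 \<le> v" "v \<le> 1"
  have "c' t > -1" "c' t < 0" using a c'_gt c'_neg by auto
  moreover have "c' t * v \<ge> c' t * 1" using mult_left_mono_neg[of v 1 "c' t"] a \<open>c' t < 0\<close> by simp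
  ultimately show ?thesis by linarith
qed

lemma D_le1: "0 \<le> t \<Longrightarrow> t \<le> 1 \<Longrightarrow> 0 \<le> v \<Longrightarrow> 1 + c' t * v \<le> 1"
  using c'_neg[of t] by (simp add: mult_nonpos_nonneg)

lemma F_range: "0 \<le> x \<Longrightarrow> x \<le> 1 \<Longrightarrow> 0 \<le> F x \<and> F x \<le> 1"
  using F_mono F0 F1 unfolding mono_on_def by (metis atLeastAtMost_iff order_refl zero_le_one)

lemma F_le: "0 \<le> x \<Longrightarrow> x \<le> y \<Longrightarrow> y \<le> 1 \<Longrightarrow> F x \<le> F y"
  using F_mono unfolding mono_on_def by auto

lemma Fpow_deriv: "x \<in> {0..1} \<Longrightarrow>
   ((\<lambda>x. F x ^ k) has_real_derivative (real k * F x ^ (k - 1) * f x)) (at x within {0..1})"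
  using DERIV_power[OF F_deriv, of x k] by (simp add: algebra_simps)

lemma Fpow_int: "0 \<le> a \<Longrightarrow> a \<le> bb \<Longrightarrow> bb \<le> 1 \<Longrightarrow>
   ((\<lambda>x. real k * F x ^ (k - 1) * f x) has_integral (F bb ^ k - F a ^ k)) {a..bb}"
  apply (rule fundamental_theorem_of_calculus)
   apply simp
  apply (subst has_real_derivative_iff_has_vector_derivative[symmetric])
  apply (rule has_field_derivative_subset[OF Fpow_deriv])
  by auto


lemma b_lt: "s \<in> {0..1} \<Longrightarrow> 0 \<le> x \<Longrightarrow> x < y \<Longrightarrow> y \<le> p s \<Longrightarrow> b x s < b y s"
  using strict_mono_onD[OF b_strict[of s], of x y] by auto

lemma b_mono: "s \<in> {0..1} \<Longrightarrow> 0 \<le> x \<Longrightarrow> x \<le> y \<Longrightarrow> y \<le> p s \<Longrightarrow> b x s \<le> b y s"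
  using b_lt[of s x y] by (cases "x = y") auto

lemma b_nonneg: "s \<in> {0..1} \<Longrightarrow> 0 \<le> v \<Longrightarrow> v \<le> p s \<Longrightarrow> 0 \<le> b v s"
  using b_mono[of s 0 v] b_zero[of s] by auto

lemma b_inner: "s \<in> {0..1} \<Longrightarrow> 0 < v \<Longrightarrow> v < p s \<Longrightarrow> 0 < b v s \<and> b v s < s"
  using b_lt[of s 0 v] b_lt[of s v "p s"] b_zero[of s] b_le[of s "p s"] p_range[of s] by auto

lemma delta_in: "s \<in> {0..1} \<Longrightarrow> 0 \<le> v \<Longrightarrow> v \<le> p s \<Longrightarrow> 0 \<le> s - b v s \<and> s - b v s \<le> 1"
  using b_nonneg[of s v] b_le[of s v] by auto

lemma p0: "p 0 = 0"
proof -
  have "p 0 < 1" by (rule p_lt) (use st in auto)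
  hence "b (p 0) 0 = 0" using b_cut[of 0] by auto
  moreover have "0 \<le> p 0" using p_range[of 0] by auto
  ultimately show ?thesis using b_lt[of 0 0 "p 0"] b_zero[of 0] by force
qed

lemma p1: "p 1 = 1" using p_one[of 1] st by auto

lemma gG_nonneg: "0 \<le> v \<Longrightarrow> v \<le> 1 \<Longrightarrow> 0 \<le> g_fn n F f v / G_fn n F v"
  unfolding g_fn_def G_fn_def using F_range[of v] f_nonneg[of v] by auto

lemma f_zero_flat:
  assumes "0 \<le> x" "x < y" "y \<le> 1" "F x = F y" "x < z" "z < y"
  shows "f z = 0"
proof -
  have der: "DERIV F z :> f z" using deriv_interior[OF F_deriv[of z]] assms by auto
  have eqs: "F w = F x" if "w \<in> {x<..<y}" for w
  proof -
    have "F x \<le> F w" "F w \<le> F y" using F_le[of x w] F_le[of w y] assms that by auto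
    thus ?thesis using assms(4) by simp
  qed
  have zin: "z \<in> {x<..<y}" using assms(5,6) by auto
  have "DERIV (\<lambda>_. F x) z :> f z"
    by (rule has_field_derivative_transform_within_open[where g="\<lambda>_. F x", OF der open_greaterThanLessThan zin eqs])
  thus ?thesis using DERIV_const DERIV_unique by blast
qed

lemma F_strict: assumes "0 \<le> x" "x < y" "y \<le> 1" shows "F x < F y"
proof (rule ccontr)
  assume "\<not> F x < F y"
  hence eq: "F x = F y" using F_le[of x y] assms by auto
  have "b y 1 \<le> b x 1"
  proof (rule DERIV_nonpos_imp_decreasing_open[OF less_imp_le[OF \<open>x<y\<close>]])
    fix z assume z: "x < z" "z < y"
    have "f z = 0" using f_zero_flat[OF assms(1,2,3) eq z] .
    hence "g_fn n F f z = 0" unfolding g_fn_def by simp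
    moreover have "z \<in> {0<..<p 1}" using z assms p1 by auto
    ultimately show "\<exists>d. DERIV (\<lambda>w. b w 1) z :> d \<and> d \<le> 0"
      using b_ode[of 1 z] by auto
  next
    show "continuous_on {x..y} (\<lambda>v. b v 1)"
      using b_cont[of 1] p1 assms by (auto intro: continuous_on_subset)
  qed
  moreover have "b x 1 < b y 1" using b_lt[of 1 x y] assms p1 by auto
  ultimately show False by simp
qed

lemma F_pos: "0 < x \<Longrightarrow> x \<le> 1 \<Longrightarrow> 0 < F x"
  using F_strict[of 0 x] F0 by auto

lemma A_eq: "0 < v \<Longrightarrow> v \<le> 1 \<Longrightarrow> g_fn n F f v / G_fn n F v = real (n - 1) * f v / F v"
proof -
  assume v: "0 < v" "v \<le> 1"
  have Fp: "F v > 0" using F_pos v by auto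
  have "n - 1 = Suc (n - 2)" using n2 by auto
  hence "F v ^ (n - 1) = F v ^ (n - 2) * F v" by simp
  thus ?thesis unfolding g_fn_def G_fn_def using Fp by (simp add: field_simps)
qed

lemma G_pos: "0 < v \<Longrightarrow> v \<le> 1 \<Longrightarrow> 0 < G_fn n F v"
  unfolding G_fn_def using F_pos by auto

lemma gG_eq: "0 < v \<Longrightarrow> v \<le> 1 \<Longrightarrow> G_fn n F v * (g_fn n F f v / G_fn n F v) = g_fn n F f v"
  using G_pos[of v] by simp


lemma cont_cdelta: "s \<in> {0..1} \<Longrightarrow> 0 \<le> q \<Longrightarrow> q \<le> p s \<Longrightarrow>
   continuous_on {0..q} (\<lambda>w. c (s - b w s)) \<and> continuous_on {0..q} (\<lambda>w. c' (s - b w s))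
   \<and> continuous_on {0..q} (\<lambda>w. b w s)"
proof -
  assume a: "s \<in> {0..1}" "0 \<le> q" "q \<le> p s"
  have bc: "continuous_on {0..q} (\<lambda>w. b w s)"
    using b_cont[OF a(1)] by (rule continuous_on_subset) (use a in auto)
  have dc: "continuous_on {0..q} (\<lambda>w. s - b w s)" by (intro continuous_intros bc)
  have im: "(\<lambda>w. s - b w s) ` {0..q} \<subseteq> {0..1}" using delta_in[OF a(1)] a by auto
  show ?thesis using continuous_on_compose2[OF c_cont dc im] continuous_on_compose2[OF c'_cont dc im] bc
    by auto
qed

lemma cmp_delta:
  assumes s: "0 \<le> s" "s < s'" "s' \<le> 1" and v: "0 \<le> v" "v \<le> p s" "v \<le> p s'"
  shows "s - b v s < s' - b v s'"
proof -
  define q where "q = min (p s) (p s')"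
  have sI: "s \<in> {0..1}" "s' \<in> {0..1}" using s by auto
  have q: "0 \<le> q" "q \<le> p s" "q \<le> p s'" "q \<le> 1" "v \<le> q"
    using p_range[OF sI(1)] p_range[OF sI(2)] s v by (auto simp: q_def)
  define e where "e w = (s' - b w s') - (s - b w s)" for w
  note C1 = cont_cdelta[OF sI(1) q(1) q(2)] and C2 = cont_cdelta[OF sI(2) q(1) q(3)]
  have econt: "continuous_on {0..q} e" unfolding e_def using C1 C2 by (intro continuous_intros) auto
  define \<beta> where "\<beta> w = (c (s - b w s) * w - b w s) / (1 + c' (s - b w s) * w)
      - (c (s' - b w s') * w - b w s') / (1 + c' (s' - b w s') * w)" for w
  have Dnz: "1 + c' (t - b w t) * w \<noteq> 0" if "t \<in> {s, s'}" "w \<in> {0..q}" for t w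
  proof -
    have "t \<in> {0..1}" "w \<le> p t" using that sI q by auto
    thus ?thesis using D_pos[of "t - b w t" w] delta_in[of t w] that q by auto
  qed
  have bcont: "continuous_on {0..q} \<beta>" unfolding \<beta>_def using C1 C2 Dnz
    by (intro continuous_intros) auto
  define A where "A w = g_fn n F f w / G_fn n F w" for w
  have ederiv: "DERIV e w :> A w * \<beta> w" if w: "w \<in> {0<..<q}" for w
  proof -
    have w1: "w \<in> {0<..<p s}" "w \<in> {0<..<p s'}" using w q by auto
    note d1 = b_ode[OF sI(1) w1(1)] and d2 = b_ode[OF sI(2) w1(2)]
    have "DERIV e w :> (0 - A w * ((c (s' - b w s') * w - b w s') / (1 + c' (s' - b w s') * w)))
       - (0 - A w * ((c (s - b w s) * w - b w s) / (1 + c' (s - b w s) * w)))"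
      unfolding e_def A_def by (intro DERIV_diff DERIV_const d1 d2)
    thus ?thesis by (simp add: \<beta>_def algebra_simps)
  qed
  show ?thesis
  proof (rule ccontr)
    assume "\<not> ?thesis"
    hence ev: "e v \<le> 0" unfolding e_def by simp
    define Z where "Z = {0..q} \<inter> e -` {..0}"
    have "closed Z" unfolding Z_def by (rule continuous_closed_preimage[OF econt]) auto
    hence cZ0: "compact ({0..q} \<inter> Z)" by (intro compact_Int_closed compact_Icc)
    have "{0..q} \<inter> Z = Z" unfolding Z_def by auto
    with cZ0 have cZ: "compact Z" by simp
    have "v \<in> Z" using ev q v unfolding Z_def by auto
    then obtain v1 where v1: "v1 \<in> Z" "\<And>y. y \<in> Z \<Longrightarrow> v1 \<le> y"
      using compact_attains_inf[OF cZ] by blast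
    have e0: "e 0 = s' - s" unfolding e_def using b_zero sI by simp
    have v1q: "0 \<le> v1" "v1 \<le> q" "e v1 \<le> 0" using v1 unfolding Z_def by auto
    have v1pos: "0 < v1" using v1q e0 s by (cases "v1 = 0") auto
    have epos: "e w > 0" if "0 \<le> w" "w < v1" for w
    proof (rule ccontr)
      assume "\<not> e w > 0"
      hence "w \<in> Z" using that v1q unfolding Z_def by auto
      thus False using v1(2) that by force
    qed
    have ev1: "e v1 = 0"
    proof -
      have "continuous_on {0..v1} e" using econt by (rule continuous_on_subset) (use v1q in auto)
      then obtain z where z: "0 \<le> z" "z \<le> v1" "e z = 0"
        using IVT2'[of e v1 0 0] v1q e0 s by auto
      thus ?thesis using epos[of z] by (cases "z = v1") auto
    qed
    have Dv: "0 < 1 + c' (s - b v1 s) * v1"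
      using D_pos[of "s - b v1 s" v1] delta_in[OF sI(1), of v1] v1q q by auto
    have bv1: "b v1 s' = b v1 s + (s' - s)" using ev1 unfolding e_def by simp
    have "\<beta> v1 = (s' - s) / (1 + c' (s - b v1 s) * v1)"
    proof -
      have "s' - b v1 s' = s - b v1 s" using bv1 by simp
      hence "\<beta> v1 = (c (s - b v1 s) * v1 - b v1 s) / (1 + c' (s - b v1 s) * v1)
          - (c (s - b v1 s) * v1 - b v1 s') / (1 + c' (s - b v1 s) * v1)"
        unfolding \<beta>_def by simp
      also have "\<dots> = ((c (s - b v1 s) * v1 - b v1 s) - (c (s - b v1 s) * v1 - b v1 s')) / (1 + c' (s - b v1 s) * v1)"
        by (simp add: diff_divide_distrib)
      also have "\<dots> = (s' - s) / (1 + c' (s - b v1 s) * v1)"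
        using bv1 by simp
      finally show ?thesis .
    qed
    hence bpos: "\<beta> v1 > 0" using Dv s by auto
    obtain \<eta> where eta: "\<eta> > 0" "\<And>w. w \<in> {0..q} \<Longrightarrow> dist w v1 < \<eta> \<Longrightarrow> dist (\<beta> w) (\<beta> v1) < \<beta> v1"
      using bcont bpos v1q unfolding continuous_on_iff by (metis atLeastAtMost_iff)
    define w0 where "w0 = max (v1/2) (v1 - \<eta>/2)"
    have w0: "0 < w0" "w0 < v1" using v1pos eta by (auto simp: w0_def)
    have "e w0 \<le> e v1"
    proof (rule DERIV_nonneg_imp_increasing_open[OF less_imp_le[OF w0(2)]])
      fix z assume z: "w0 < z" "z < v1"
      have zq: "z \<in> {0<..<q}" using z w0 v1q by auto
      have "dist z v1 < \<eta>" using z w0 eta by (auto simp: w0_def dist_real_def)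
      hence "\<beta> z > 0" using eta(2)[of z] zq by (auto simp: dist_real_def)
      moreover have "A z \<ge> 0" unfolding A_def using gG_nonneg[of z] zq q by auto
      ultimately show "\<exists>y. DERIV e z :> y \<and> 0 \<le> y" using ederiv[OF zq] by auto
    next
      show "continuous_on {w0..v1} e" using econt by (rule continuous_on_subset) (use w0 v1q in auto)
    qed
    thus False using epos[of w0] w0 ev1 by auto
  qed
qed


lemma G_deriv: "0 < w \<Longrightarrow> w < 1 \<Longrightarrow> DERIV (\<lambda>w. G_fn n F w) w :> g_fn n F f w"
proof -
  assume w: "0 < w" "w < 1"
  have "DERIV F w :> f w" using deriv_interior[OF F_deriv[of w]] w by auto
  from DERIV_power[OF this, of "n - 1"]
  have "DERIV (\<lambda>w. F w ^ (n - 1)) w :> real (n - 1) * (f w * F w ^ (n - 1 - Suc 0))" by simp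
  moreover have "n - 1 - Suc 0 = n - 2" by simp
  ultimately show ?thesis unfolding G_fn_def g_fn_def by (simp add: algebra_simps)
qed

lemma G_cont: "continuous_on {0..1} (\<lambda>w. G_fn n F w)"
  unfolding G_fn_def by (intro continuous_intros F_cont)

lemma alg_U:
  fixes g G N C cp w :: real
  assumes "G \<noteq> 0" "1 + cp * w \<noteq> 0"
  shows "g * N + ((cp * (0 - (g / G) * (N / (1 + cp * w)))) * w + 1 * C - (g / G) * (N / (1 + cp * w))) * G = G * C"
proof -
  define B where "B = (g / G) * (N / (1 + cp * w))"
  have "(cp * (0 - B)) * w + 1 * C - B = C - B * (1 + cp * w)" by (simp add: algebra_simps)
  moreover have "B * (1 + cp * w) = (g / G) * N" unfolding B_def using assms(2) by simp
  ultimately have "(cp * (0 - B)) * w + 1 * C - B = C - (g / G) * N" by simp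
  hence "((cp * (0 - B)) * w + 1 * C - B) * G = (C - (g / G) * N) * G" by simp
  also have "\<dots> = C * G - g * N" using assms(1) by (simp add: field_simps)
  finally have "((cp * (0 - B)) * w + 1 * C - B) * G = C * G - g * N" .
  thus ?thesis unfolding B_def by (simp add: algebra_simps)
qed

lemma U_deriv:
  assumes t: "t \<in> {0..1}" and w: "0 < w" "w < p t"
  shows "DERIV (\<lambda>w. G_fn n F w * (c (t - b w t) * w - b w t)) w :> G_fn n F w * c (t - b w t)"
proof -
  have w1: "w < 1" using w p_range[OF t] by auto
  define B where "B = (g_fn n F f w / G_fn n F w) * ((c (t - b w t) * w - b w t) / (1 + c' (t - b w t) * w))"
  have bd: "DERIV (\<lambda>w. b w t) w :> B" unfolding B_def using b_ode[OF t] w by auto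
  have di: "0 < t - b w t" "t - b w t < 1" using b_inner[OF t w] t by auto
  have cd: "DERIV c (t - b w t) :> c' (t - b w t)" using deriv_interior[OF c_deriv[of "t - b w t"]] di by auto
  have cdd: "DERIV (\<lambda>w. c (t - b w t)) w :> c' (t - b w t) * (0 - B)"
    by (rule DERIV_chain2[where f=c and g="\<lambda>w. t - b w t", OF cd]) (intro DERIV_diff DERIV_const bd)
  have all: "DERIV (\<lambda>w. G_fn n F w * (c (t - b w t) * w - b w t)) w :>
     g_fn n F f w * (c (t - b w t) * w - b w t) + ((c' (t - b w t) * (0 - B)) * w + 1 * c (t - b w t) - B) * G_fn n F w"
    by (intro DERIV_mult DERIV_diff cdd DERIV_ident bd G_deriv w w1)
  have Gp: "G_fn n F w > 0" using G_pos w w1 by auto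
  have Dp: "1 + c' (t - b w t) * w > 0" using D_pos[of "t - b w t" w] di w w1 by auto
  have "g_fn n F f w * (c (t - b w t) * w - b w t) + ((c' (t - b w t) * (0 - B)) * w + 1 * c (t - b w t) - B) * G_fn n F w
      = G_fn n F w * c (t - b w t)"
    unfolding B_def using alg_U[of "G_fn n F w" "c' (t - b w t)" w "g_fn n F f w"] Gp Dp by simp
  with all show ?thesis by simp
qed

lemma cmp_N:
  assumes s: "0 \<le> s" "s < s'" "s' \<le> 1" and v: "0 \<le> v" "v \<le> p s" "v \<le> p s'"
  shows "c (s' - b v s') * v - b v s' \<le> c (s - b v s) * v - b v s"
proof (cases "v = 0")
  case True thus ?thesis using b_zero s by auto
next
  case False
  hence vp: "0 < v" using v by auto
  have sI: "s \<in> {0..1}" "s' \<in> {0..1}" using s by auto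
  have v1: "v \<le> 1" using v p_range[OF sI(1)] by auto
  define W where "W w = G_fn n F w * (c (s' - b w s') * w - b w s') - G_fn n F w * (c (s - b w s) * w - b w s)" for w
  have "W v \<le> W 0"
  proof (rule DERIV_nonpos_imp_decreasing_open[OF v(1)])
    fix z assume z: "0 < z" "z < v"
    have d: "DERIV W z :> G_fn n F z * c (s' - b z s') - G_fn n F z * c (s - b z s)"
      unfolding W_def by (intro DERIV_diff U_deriv sI) (use z v in auto)
    have "s - b z s < s' - b z s'" using cmp_delta[OF s, of z] z v by auto
    hence "c (s' - b z s') \<le> c (s - b z s)"
      using c_anti delta_in[OF sI(1), of z] delta_in[OF sI(2), of z] z v by auto
    moreover have "G_fn n F z \<ge> 0" using G_pos[of z] z v v1 by auto
    ultimately have "G_fn n F z * c (s' - b z s') - G_fn n F z * c (s - b z s) \<le> 0"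
      by (simp add: mult_left_mono)
    thus "\<exists>y. DERIV W z :> y \<and> y \<le> 0" using d by auto
  next
    note C1 = cont_cdelta[OF sI(1) v(1) v(2)] and C2 = cont_cdelta[OF sI(2) v(1) v(3)]
    have "continuous_on {0..v} (\<lambda>w. G_fn n F w)" using G_cont by (rule continuous_on_subset) (use v1 in auto)
    thus "continuous_on {0..v} W" unfolding W_def using C1 C2 by (intro continuous_intros) auto
  qed
  moreover have "W 0 = 0" unfolding W_def G_fn_def using F0 n2 by simp
  moreover have "G_fn n F v > 0" using G_pos vp v1 by auto
  ultimately have "W v \<le> 0" "G_fn n F v > 0" by auto
  moreover have "W v = G_fn n F v * ((c (s' - b v s') * v - b v s') - (c (s - b v s) * v - b v s))"
    unfolding W_def by (simp add: right_diff_distrib)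
  ultimately have "G_fn n F v * ((c (s' - b v s') * v - b v s') - (c (s - b v s) * v - b v s)) \<le> 0" by simp
  with \<open>G_fn n F v > 0\<close> show ?thesis by (simp add: mult_le_0_iff)
qed

lemma cmp_b:
  assumes s: "0 \<le> s" "s < s'" "s' \<le> 1" and v: "0 \<le> v" "v \<le> p s" "v \<le> p s'" "v < 1"
  shows "b v s - (s' - s) * v / (1 - v) \<le> b v s'"
proof -
  have sI: "s \<in> {0..1}" "s' \<in> {0..1}" using s by auto
  have N: "c (s' - b v s') * v - b v s' \<le> c (s - b v s) * v - b v s" using cmp_N[OF s v(1-3)] .
  have dl: "s - b v s < s' - b v s'" using cmp_delta[OF s v(1-3)] .
  have "c (s - b v s) + (s - b v s) \<le> c (s' - b v s') + (s' - b v s')"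
    using c_id_mono dl delta_in[OF sI(1) v(1,2)] delta_in[OF sI(2) v(1,3)] by auto
  hence "(c (s - b v s) - c (s' - b v s')) * v \<le> ((s' - b v s') - (s - b v s)) * v"
    using v by (intro mult_right_mono) auto
  hence "(b v s - b v s') * (1 - v) \<le> (s' - s) * v" using N by (simp add: algebra_simps)
  hence "b v s - b v s' \<le> (s' - s) * v / (1 - v)" using v by (simp add: pos_le_divide_eq)
  thus ?thesis by simp
qed

lemma p_to_1: assumes "L < 1" shows "\<exists>s. 0 < s \<and> s < st \<and> L < p s"
proof (rule ccontr)
  assume "\<not> ?thesis"
  hence H: "\<And>s. 0 < s \<Longrightarrow> s < st \<Longrightarrow> p s \<le> L" by force
  have pst: "p st = 1" using p_one st by auto
  have L0: "0 < L" using H[of "st/2"] p_range[of "st/2"] st by auto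
  define K where "K = L / (1 - L)"
  have K0: "K \<ge> 0" using L0 assms by (simp add: K_def)
  have key: "s - (st - s) * K \<le> b L st" if s: "0 < s" "s < st" for s
  proof -
    have sI: "s \<in> {0..1}" using s st by auto
    have ps: "s \<le> p s" "p s \<le> L" "p s < 1" using p_range[OF sI] H[OF s] assms by auto
    have "b (p s) s - (st - s) * p s / (1 - p s) \<le> b (p s) st"
      by (rule cmp_b) (use s st ps pst in auto)
    moreover have "b (p s) s = s" using b_cut[OF sI] ps by auto
    moreover have "p s / (1 - p s) \<le> L / (1 - L)"
      using ps s assms by (intro frac_le) auto
    hence "(st - s) * (p s / (1 - p s)) \<le> (st - s) * K" unfolding K_def by (rule mult_left_mono) (use s in auto)
    moreover have "b (p s) st \<le> b L st"
      by (rule b_mono) (use st ps pst assms s in auto)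
    ultimately show ?thesis by (simp add: algebra_simps)
  qed
  have bL: "st \<le> b L st"
  proof (rule ccontr)
    assume "\<not> ?thesis"
    hence gap: "st - b L st > 0" by simp
    define t where "t = min (st/2) ((st - b L st) / (2 * (1 + K)))"
    have t0: "0 < t" "t < st" using gap st K0 by (auto simp: t_def)
    have "t * (1 + K) \<le> (st - b L st) / 2"
    proof -
      have "t \<le> (st - b L st) / (2 * (1 + K))" by (simp add: t_def)
      hence "t * (1 + K) \<le> (st - b L st) / (2 * (1 + K)) * (1 + K)"
        using K0 by (intro mult_right_mono) auto
      moreover have "(st - b L st) / (2 * (1 + K)) * (1 + K) = (st - b L st) / 2"
        using K0 by (simp add: field_simps)
      ultimately show ?thesis by linarith
    qed
    moreover have "(st - t) - (st - (st - t)) * K \<le> b L st" using key[of "st - t"] t0 by auto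
    ultimately show False using gap by (simp add: algebra_simps)
  qed
  have "b L st < b 1 st" by (rule b_lt) (use st assms L0 pst in auto)
  moreover have "b 1 st \<le> st" using b_le[of st 1] st pst by auto
  ultimately show False using bL by simp
qed


lemma p_to_0: assumes L: "0 < L" shows "\<exists>s. 0 < s \<and> s < st \<and> p s < L"
proof (rule ccontr)
  assume "\<not> ?thesis"
  hence H: "\<And>s. 0 < s \<Longrightarrow> s < st \<Longrightarrow> L \<le> p s" by force
  define M where "M = min L 1"
  have M: "0 < M" "M \<le> 1" "M \<le> L" using L by (auto simp: M_def)
  define \<eta> where "\<eta> = (M/4) * (F M - F (M/2))"
  have eta: "\<eta> > 0" unfolding \<eta>_def using F_strict[of "M/2" M] M by auto
  define s where "s = min (st/2) (min (M/10) (\<eta>/2))"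
  have s: "0 < s" "s < st" "s \<le> M/10" "s \<le> \<eta>/2" using st M eta by (auto simp: s_def)
  have sI: "s \<in> {0..1}" using s st by auto
  have ps: "M \<le> p s" using H[OF s(1,2)] M by auto
  define \<phi> where "\<phi> w = b w s - (M/4) * F w" for w
  have "\<phi> (M/2) \<le> \<phi> M"
  proof (rule DERIV_nonneg_imp_increasing_open[where f=\<phi> and a="M/2" and b=M])
    show "M/2 \<le> M" using M by auto
  next
    fix z assume z: "M/2 < z" "z < M"
    have zI: "z \<in> {0<..<p s}" "0 < z" "z < 1" using z M ps by auto
    define N where "N = c (s - b z s) * z - b z s"
    define D where "D = 1 + c' (s - b z s) * z"
    define A where "A = g_fn n F f z / G_fn n F z"
    have bd: "DERIV (\<lambda>w. b w s) z :> A * (N / D)"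
      using b_ode[OF sI zI(1)] unfolding A_def N_def D_def by simp
    have Fd: "DERIV F z :> f z" using deriv_interior[OF F_deriv[of z]] zI by auto
    have d: "DERIV \<phi> z :> A * (N / D) - (M/4) * f z"
      unfolding \<phi>_def by (intro DERIV_diff DERIV_cmult bd Fd)
    have bz: "0 \<le> b z s" "b z s \<le> s" using b_nonneg[OF sI, of z] b_le[OF sI, of z] zI by auto
    have dz: "0 \<le> s - b z s" "s - b z s \<le> 1" using bz sI by auto
    have "c s \<le> c (s - b z s)" using c_anti[of "s - b z s" s] dz bz sI by auto
    moreover have "1 - s \<le> c s" using c_ge sI by auto
    ultimately have f1: "(1 - s) * z \<le> c (s - b z s) * z" using zI by (intro mult_right_mono) auto
    have f2: "(1 - s) * (M/2) \<le> (1 - s) * z" using z s sI by (intro mult_left_mono) auto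
    have f3: "s * M \<le> s" using s M by (simp add: mult_left_le)
    have f4: "(1 - s) * (M/2) = M/2 - (s * M) / 2" by (simp add: field_simps)
    have NM: "M/4 \<le> N" unfolding N_def using f1 f2 f3 f4 bz s by linarith
    have D: "0 < D" "D \<le> 1" unfolding D_def using D_pos[of "s - b z s" z] D_le1[of "s - b z s" z] dz zI by auto
    have "N \<le> N / D" using D NM M by (simp add: le_divide_eq mult_left_le)
    hence ND: "M/4 \<le> N / D" using NM by linarith
    have fz: "0 \<le> f z" using f_nonneg zI by auto
    have A: "f z \<le> A"
    proof -
      have Fz: "0 < F z" "F z \<le> 1" using F_pos F_range zI by auto
      have "1 \<le> real (n - 1)" using n2 by auto
      hence "F z \<le> real (n - 1)" using Fz by simp
      hence "f z * F z \<le> real (n - 1) * f z" using fz mult_left_mono[of "F z" "real (n - 1)" "f z"] by (simp add: mult.commute)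
      hence "f z \<le> real (n - 1) * f z / F z" using Fz by (simp add: le_divide_eq)
      thus ?thesis unfolding A_def using A_eq zI by simp
    qed
    have "f z * (M/4) \<le> A * (N / D)" using A ND fz M by (intro mult_mono) auto
    thus "\<exists>y. DERIV \<phi> z :> y \<and> 0 \<le> y" using d by (intro exI[of _ "A * (N / D) - (M/4) * f z"]) (auto simp: algebra_simps)
  next
    have "continuous_on {0..M} (\<lambda>w. b w s)" using cont_cdelta[OF sI _ ps] M by auto
    moreover have "continuous_on {0..M} F" using F_cont by (rule continuous_on_subset) (use M in auto)
    ultimately have "continuous_on {0..M} \<phi>" unfolding \<phi>_def by (intro continuous_intros)
    thus "continuous_on {M/2..M} \<phi>" by (rule continuous_on_subset) (use M in auto)
  qed
  hence "b (M/2) s + \<eta> \<le> b M s" unfolding \<phi>_def \<eta>_def by (simp add: algebra_simps)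
  moreover have "0 \<le> b (M/2) s" using b_nonneg[OF sI, of "M/2"] M ps by auto
  moreover have "b M s \<le> s" using b_le[OF sI, of M] M ps by auto
  ultimately show False using s eta by auto
qed


lemma integral_nonneg_any: fixes g :: "real \<Rightarrow> real"
  shows "(\<And>x. x \<in> S \<Longrightarrow> 0 \<le> g x) \<Longrightarrow> 0 \<le> integral S g"
  by (metis integral_nonneg not_integrable_integral order_refl)

lemma integral_pt: "integral {a..a::real} g = 0"
  by (metis box_real(2) integral_refl)

lemma h_nonneg: "0 \<le> v \<Longrightarrow> v \<le> 1 \<Longrightarrow> 0 \<le> x \<Longrightarrow> x \<le> 1 \<Longrightarrow> 0 \<le> h_fn n F f v x"
  unfolding h_fn_def using f_nonneg[of v] f_nonneg[of x] F_range[of x] by auto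

lemma EU_second_nonneg: assumes sI: "s \<in> {0..1}"
  shows "0 \<le> integral {p s..1} (\<lambda>v.
        integral {0..p s} (\<lambda>x. v * h_fn n F f v x)
      + integral {p s..v} (\<lambda>x. c (m x s - s) * v * h_fn n F f v x))"
proof (rule integral_nonneg_any)
  fix v assume v: "v \<in> {p s..1}"
  have ps: "0 \<le> p s" "p s \<le> 1" using p_range[OF sI] sI by auto
  have "0 \<le> integral {0..p s} (\<lambda>x. v * h_fn n F f v x)"
    by (rule integral_nonneg_any) (use v ps h_nonneg in auto)
  moreover have "0 \<le> integral {p s..v} (\<lambda>x. c (m x s - s) * v * h_fn n F f v x)"
  proof (rule integral_nonneg_any)
    fix x assume x: "x \<in> {p s..v}"
    have "0 \<le> m x s - s" "m x s - s \<le> 1" using m_range[OF sI, of x] x v by auto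
    hence "0 \<le> c (m x s - s)" using c_nonneg by auto
    thus "0 \<le> c (m x s - s) * v * h_fn n F f v x" using h_nonneg[of v x] x v ps by auto
  qed
  ultimately show "0 \<le> integral {0..p s} (\<lambda>x. v * h_fn n F f v x)
      + integral {p s..v} (\<lambda>x. c (m x s - s) * v * h_fn n F f v x)" by simp
qed

definition (in IFA) W :: "real \<Rightarrow> real" where "W v = real n * F v ^ (n - 1) * f v"

lemma W_cont: "continuous_on {0..1} W" unfolding W_def using F_cont f_cont by (intro continuous_intros)

lemma W_nonneg: "0 \<le> v \<Longrightarrow> v \<le> 1 \<Longrightarrow> 0 \<le> W v"
  unfolding W_def using F_range[of v] f_nonneg[of v] by auto

lemma W_int: "0 \<le> a \<Longrightarrow> a \<le> bb \<Longrightarrow> bb \<le> 1 \<Longrightarrow> (W has_integral (F bb ^ n - F a ^ n)) {a..bb}"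
  unfolding W_def using Fpow_int[of a bb n] by simp

lemma cont_sub: fixes g :: "real \<Rightarrow> real" shows "continuous_on {0..1} g \<Longrightarrow> 0 \<le> a \<Longrightarrow> bb \<le> 1 \<Longrightarrow> continuous_on {a..bb} g"
  by (rule continuous_on_subset) auto

lemma int_split: fixes g :: "real \<Rightarrow> real"
  assumes "continuous_on {0..1} g" "0 \<le> a" "a \<le> cc" "cc \<le> bb" "bb \<le> 1"
  shows "integral {a..bb} g = integral {a..cc} g + integral {cc..bb} g"
  using Henstock_Kurzweil_Integration.integral_combine[OF assms(3,4) integrable_continuous_interval[OF cont_sub[OF assms(1) assms(2) assms(5)]]] by simp

lemma part1: "\<exists>s. 0 < s \<and> s < st \<and> EU_S_F n F f c b m p s > EU_S_F n F f c b m p 1"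
proof -
  have one: "(1::real) \<in> {0..1}" by simp
  have gap: "(1 - st) / 2 > 0" using st by auto
  have bc1: "continuous_on {0..1} (\<lambda>v. b v 1)" using b_cont[OF one] p1 by simp
  obtain d where d: "d > 0" "\<And>v. v \<in> {0..1} \<Longrightarrow> dist v 0 < d \<Longrightarrow> dist (b v 1) (b 0 1) < (1 - st) / 2"
    using bc1 gap unfolding continuous_on_iff by (metis atLeastAtMost_iff order_refl zero_le_one)
  define v0 where "v0 = min (d/2) (1/2)"
  have v0: "0 < v0" "v0 < 1" using d by (auto simp: v0_def)
  have bsmall: "b v 1 \<le> (1 - st) / 2" if "0 \<le> v" "v \<le> v0" for v
    using d(2)[of v] that v0 b_zero[OF one] by (auto simp: v0_def dist_real_def)
  define \<kappa> where "\<kappa> = c st - c ((1 + st) / 2)"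
  have kap: "\<kappa> > 0" unfolding \<kappa>_def using c_strict[of st "(1 + st)/2"] st by auto
  define \<gamma>0 where "\<gamma>0 = integral {0..v0} (\<lambda>v. v * W v)"
  have vWcont: "continuous_on {0..1} (\<lambda>v. v * W v)" using W_cont by (intro continuous_intros)
  have g0: "\<gamma>0 > 0"
  proof -
    have "\<gamma>0 = integral {0..v0/2} (\<lambda>v. v * W v) + integral {v0/2..v0} (\<lambda>v. v * W v)"
      unfolding \<gamma>0_def by (rule int_split[OF vWcont]) (use v0 in auto)
    moreover have "0 \<le> integral {0..v0/2} (\<lambda>v. v * W v)"
      by (rule integral_nonneg_any) (use W_nonneg v0 in auto)
    moreover have "integral {v0/2..v0} (\<lambda>v. (v0/2) * W v) \<le> integral {v0/2..v0} (\<lambda>v. v * W v)"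
    proof (rule integral_le)
      have "continuous_on {v0/2..v0} W" by (rule cont_sub[OF W_cont]) (use v0 in auto)
      thus "(\<lambda>v. (v0/2) * W v) integrable_on {v0/2..v0}"
        by (intro integrable_continuous_interval continuous_intros)
      show "(\<lambda>v. v * W v) integrable_on {v0/2..v0}"
        by (intro integrable_continuous_interval cont_sub[OF vWcont]) (use v0 in auto)
      fix x assume x: "x \<in> {v0/2..v0}"
      show "(v0/2) * W x \<le> x * W x" using W_nonneg[of x] x v0 by (intro mult_right_mono) auto
    qed
    moreover have "integral {v0/2..v0} (\<lambda>v. (v0/2) * W v) = (v0/2) * (F v0 ^ n - F (v0/2) ^ n)"
      using integral_unique[OF W_int[of "v0/2" v0]] v0 by simp
    moreover have "F (v0/2) ^ n < F v0 ^ n"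
      using F_strict[of "v0/2" v0] F_range[of "v0/2"] v0 using n2 by (intro power_strict_mono) auto
    moreover have "0 < (v0/2) * (F v0 ^ n - F (v0/2) ^ n)"
      using calculation(5) v0 by (intro mult_pos_pos) auto
    ultimately show ?thesis by linarith
  qed
  define \<gamma> where "\<gamma> = \<kappa> * \<gamma>0"
  have gam: "\<gamma> > 0" using kap g0 by (simp add: \<gamma>_def)
  have Fncont: "continuous_on {0..1} (\<lambda>x. F x ^ n)" using F_cont by (intro continuous_intros)
  obtain d2 where d2: "d2 > 0" "\<And>x. x \<in> {0..1} \<Longrightarrow> dist x 1 < d2 \<Longrightarrow> dist (F x ^ n) (F 1 ^ n) < \<gamma>"
    using Fncont gam unfolding continuous_on_iff by (metis atLeastAtMost_iff order_refl zero_le_one)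
  define L where "L = max v0 (1 - d2/2)"
  have L: "v0 \<le> L" "L < 1" "0 \<le> L" using v0 d2 by (auto simp: L_def)
  have FL: "F L ^ n > 1 - \<gamma>"
  proof -
    have "1 - d2/2 \<le> L" by (simp add: L_def)
    hence "dist L 1 < d2" using L d2 by (simp add: dist_real_def)
    hence "dist (F L ^ n) (F 1 ^ n) < \<gamma>" using d2(2)[of L] L by auto
    thus ?thesis using F1 by (simp add: dist_real_def)
  qed
  obtain s where s: "0 < s" "s < st" "L < p s" using p_to_1[OF L(2)] by blast
  have sI: "s \<in> {0..1}" using s st by auto
  define P where "P = p s"
  have P: "L < P" "P < 1" "s \<le> P" using s p_lt[of s] p_range[OF sI] by (auto simp: P_def)
  have FP: "F P ^ n > 1 - \<gamma>"
  proof -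
    have "F L ^ n \<le> F P ^ n" using F_le[of L P] F_range[of L] L P by (intro power_mono) auto
    thus ?thesis using FL by simp
  qed
  define Is where "Is v = c (s - b v s) * v * W v" for v
  define J where "J v = c (1 - b v 1) * v * W v" for v
  have Iscont: "continuous_on {0..P} Is"
    unfolding Is_def using cont_cdelta[OF sI, of P] P sI cont_sub[OF W_cont, of 0 P]
    by (auto simp: P_def intro!: continuous_intros)
  have Jcont: "continuous_on {0..1} J"
    unfolding J_def using cont_cdelta[OF one, of 1] p1 W_cont by (auto intro!: continuous_intros)
  have EUs: "EU_S_F n F f c b m p s \<ge> integral {0..P} Is"
    using EU_second_nonneg[OF sI] unfolding EU_S_F_def Is_def W_def P_def by simp
  have EU1: "EU_S_F n F f c b m p 1 = integral {0..1} J"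
    unfolding EU_S_F_def J_def W_def p1 integral_pt by simp
  have "integral {0..1} J = integral {0..P} J + integral {P..1} J"
    by (rule int_split[OF Jcont]) (use P s in auto)
  moreover have "integral {P..1} J \<le> 1 - F P ^ n"
  proof -
    have "integral {P..1} J \<le> integral {P..1} W"
    proof (rule integral_le)
      show "J integrable_on {P..1}" using P s
        by (intro integrable_continuous_interval cont_sub[OF Jcont]) auto
      show "W integrable_on {P..1}" using P s
        by (intro integrable_continuous_interval cont_sub[OF W_cont]) auto
      fix v assume v: "v \<in> {P..1}"
      have v01: "0 \<le> v" "v \<le> 1" using v P s by auto
      have "0 \<le> 1 - b v 1" "1 - b v 1 \<le> 1" using delta_in[OF one, of v] v01 p1 by auto
      hence "c (1 - b v 1) \<le> 1" "0 \<le> c (1 - b v 1)" using c_le1 c_nonneg by auto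
      hence "c (1 - b v 1) * v \<le> 1" using v01 by (simp add: mult_le_one)
      thus "J v \<le> W v" unfolding J_def using W_nonneg[OF v01]
        by (metis mult_left_le_one_le mult.commute mult.assoc \<open>0 \<le> c (1 - b v 1)\<close> v01(1) zero_le_mult_iff)
    qed
    also have "\<dots> = 1 - F P ^ n" using integral_unique[OF W_int[of P 1]] P s F1 by simp
    finally show ?thesis .
  qed
  moreover have "integral {0..P} Is - integral {0..P} J \<ge> \<gamma>"
  proof -
    have intIs: "Is integrable_on {0..P}" using Iscont by (rule integrable_continuous_interval)
    have intJ: "J integrable_on {0..P}" using P by (intro integrable_continuous_interval cont_sub[OF Jcont]) auto
    have intD: "(\<lambda>v. Is v - J v) integrable_on {0..P}" using intIs intJ by (rule integrable_diff)
    have "integral {0..P} Is - integral {0..P} J = integral {0..P} (\<lambda>v. Is v - J v)"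
      using intIs intJ by (simp add: integral_diff)
    also have "\<dots> = integral {0..v0} (\<lambda>v. Is v - J v) + integral {v0..P} (\<lambda>v. Is v - J v)"
      using Henstock_Kurzweil_Integration.integral_combine[OF _ _ intD, of v0] v0 P L by auto
    finally have split: "integral {0..P} Is - integral {0..P} J =
       integral {0..v0} (\<lambda>v. Is v - J v) + integral {v0..P} (\<lambda>v. Is v - J v)" .
    have "0 \<le> integral {v0..P} (\<lambda>v. Is v - J v)"
    proof (rule integral_nonneg_any)
      fix v assume v: "v \<in> {v0..P}"
      have v01: "0 \<le> v" "v \<le> 1" "v \<le> p s" "v \<le> p 1" using v v0 P p1 by (auto simp: P_def)
      have "s - b v s < 1 - b v 1" using cmp_delta[of s 1 v] v01 s st by auto
      hence "c (1 - b v 1) \<le> c (s - b v s)"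
        using c_anti delta_in[OF sI, of v] delta_in[OF one, of v] v01 by auto
      hence "c (1 - b v 1) * (v * W v) \<le> c (s - b v s) * (v * W v)"
        using W_nonneg[of v] v01 by (intro mult_right_mono) auto
      thus "0 \<le> Is v - J v" unfolding Is_def J_def by (simp add: mult.assoc)
    qed
    moreover have "\<gamma> \<le> integral {0..v0} (\<lambda>v. Is v - J v)"
    proof -
      have "integral {0..v0} (\<lambda>v. \<kappa> * (v * W v)) \<le> integral {0..v0} (\<lambda>v. Is v - J v)"
      proof (rule integral_le)
        show "(\<lambda>v. \<kappa> * (v * W v)) integrable_on {0..v0}" using v0
          by (intro integrable_continuous_interval continuous_intros cont_sub[OF vWcont]) auto
        show "(\<lambda>v. Is v - J v) integrable_on {0..v0}"
          using intD by (rule integrable_subinterval_real) (use v0 P L in auto)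
        fix v assume v: "v \<in> {0..v0}"
        have v01: "0 \<le> v" "v \<le> 1" "v \<le> p s" "v \<le> p 1" using v v0 P L p1 by (auto simp: P_def)
        have "c st \<le> c (s - b v s)"
          using c_anti[of "s - b v s" st] delta_in[OF sI, of v] v01 b_nonneg[OF sI, of v] s st by auto
        moreover have "c (1 - b v 1) \<le> c ((1 + st) / 2)"
          using c_anti[of "(1 + st)/2" "1 - b v 1"] bsmall[of v] v v01 st delta_in[OF one, of v] by auto
        ultimately have "\<kappa> \<le> c (s - b v s) - c (1 - b v 1)" unfolding \<kappa>_def by simp
        hence "\<kappa> * (v * W v) \<le> (c (s - b v s) - c (1 - b v 1)) * (v * W v)"
          using W_nonneg[of v] v01 by (intro mult_right_mono) auto
        thus "\<kappa> * (v * W v) \<le> Is v - J v" unfolding Is_def J_def by (simp add: algebra_simps)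
      qed
      moreover have "integral {0..v0} (\<lambda>v. \<kappa> * (v * W v)) = \<gamma>"
        unfolding \<gamma>_def \<gamma>0_def by simp
      ultimately show ?thesis by simp
    qed
    ultimately show ?thesis using split by simp
  qed
  ultimately have "EU_S_F n F f c b m p 1 < EU_S_F n F f c b m p s"
    using EUs EU1 FP by simp
  thus ?thesis using s by blast
qed


definition (in IFA) k :: "real \<Rightarrow> real" where "k x = real (n - 1) * F x ^ (n - 1 - 1) * f x"

lemma k_cont: "continuous_on {0..1} k" unfolding k_def using F_cont f_cont by (intro continuous_intros)

lemma k_nonneg: "0 \<le> x \<Longrightarrow> x \<le> 1 \<Longrightarrow> 0 \<le> k x"
  unfolding k_def using F_range[of x] f_nonneg[of x] by auto

lemma k_int: "0 \<le> a \<Longrightarrow> a \<le> bb \<Longrightarrow> bb \<le> 1 \<Longrightarrow> (k has_integral (F bb ^ (n - 1) - F a ^ (n - 1))) {a..bb}"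
  unfolding k_def using Fpow_int[of a bb "n - 1"] by simp

lemma k_integral: "0 \<le> a \<Longrightarrow> a \<le> bb \<Longrightarrow> bb \<le> 1 \<Longrightarrow> integral {a..bb} k = F bb ^ (n - 1) - F a ^ (n - 1)"
  using k_int integral_unique by blast

lemma h_eq: "h_fn n F f v x = real n * f v * k x"
proof -
  have "n - 1 - 1 = n - 2" by simp
  thus ?thesis unfolding h_fn_def k_def by (simp add: algebra_simps)
qed

lemma inner_eq: "integral S (\<lambda>x. g x * v * h_fn n F f v x) = v * real n * f v * integral S (\<lambda>x. g x * k x)"
proof -
  have "(\<lambda>x. g x * v * h_fn n F f v x) = (\<lambda>x. (v * real n * f v) * (g x * k x))"
    by (rule ext) (simp add: h_eq algebra_simps)
  thus ?thesis by simp
qed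

lemma inner_eq1: "integral S (\<lambda>x. v * h_fn n F f v x) = v * real n * f v * integral S k"
  using inner_eq[of S "\<lambda>_. 1" v] by simp

lemma m_props: "s \<in> {0..1} \<Longrightarrow> x \<in> {p s..1} \<Longrightarrow>
   0 \<le> m x s - s \<and> m x s - s \<le> 1 \<and> c (m x s - s) * x = (m x s - s) + s"
  using m_range[of s x] m_eq[of s x] by auto

lemma m_mono: assumes sI: "s \<in> {0..1}" and xy: "p s \<le> x" "x \<le> y" "y \<le> 1"
  shows "m x s - s \<le> m y s - s"
proof (rule ccontr)
  assume "\<not> ?thesis"
  hence lt: "m y s - s < m x s - s" by simp
  have mx: "0 \<le> m x s - s" "m x s - s \<le> 1" "c (m x s - s) * x = (m x s - s) + s"
    using m_props[OF sI, of x] xy by auto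
  have my: "0 \<le> m y s - s" "m y s - s \<le> 1" "c (m y s - s) * y = (m y s - s) + s"
    using m_props[OF sI, of y] xy by auto
  have c1: "c (m x s - s) \<le> c (m y s - s)" using c_anti lt mx my by auto
  have c0: "0 \<le> c (m x s - s)" using c_nonneg mx by auto
  have x0: "0 \<le> x" using xy p_range[OF sI] sI by auto
  have "c (m x s - s) * x \<le> c (m y s - s) * x" using c1 x0 by (rule mult_right_mono)
  also have "\<dots> \<le> c (m y s - s) * y" using xy c0 c1 by (intro mult_left_mono) auto
  finally show False using mx(3) my(3) lt by simp
qed

lemma E_anti: "s \<in> {0..1} \<Longrightarrow> p s \<le> x \<Longrightarrow> x \<le> y \<Longrightarrow> y \<le> 1 \<Longrightarrow> c (m y s - s) \<le> c (m x s - s)"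
  using m_mono[of s x y] m_props[of s x] m_props[of s y] c_anti by auto

lemma E_int: assumes sI: "s \<in> {0..1}" and ab: "p s \<le> a" "a \<le> bb" "bb \<le> 1"
  shows "(\<lambda>x. c (m x s - s) * k x) integrable_on {a..bb}"
proof (rule integrable_antimono_times_cont)
  show "continuous_on {a..bb} k"
    by (rule cont_sub[OF k_cont]) (use ab p_range[OF sI] sI in auto)
  fix x y assume "x \<in> {a..bb}" "y \<in> {a..bb}" "x \<le> y"
  thus "c (m y s - s) \<le> c (m x s - s)" using E_anti[OF sI] ab by auto
qed

lemma E_le1: "s \<in> {0..1} \<Longrightarrow> x \<in> {p s..1} \<Longrightarrow> c (m x s - s) \<le> 1 \<and> 0 \<le> c (m x s - s)"
  using m_props[of s x] c_le1 c_nonneg by auto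

lemma gain: assumes s: "0 < s" "s \<le> 1" and x: "p s \<le> x" "x \<le> 1"
  shows "- c' 1 * s / 2 \<le> c (m x s - s) - c (m x 0 - 0)"
proof -
  have sI: "s \<in> {0..1}" and zI: "(0::real) \<in> {0..1}" using s by auto
  have x0: "0 \<le> x" using x p_range[OF sI] s by auto
  define ds where "ds = m x s - s"
  define d0 where "d0 = m x 0 - 0"
  have hs: "0 \<le> ds" "ds \<le> 1" "c ds * x = ds + s" using m_props[OF sI, of x] x by (auto simp: ds_def)
  have h0: "0 \<le> d0" "d0 \<le> 1" "c d0 * x = d0" using m_props[OF zI, of x] x x0 p0 by (auto simp: d0_def)
  have le: "ds \<le> d0"
  proof (rule ccontr)
    assume "\<not> ds \<le> d0"
    hence "c ds \<le> c d0" using c_anti hs h0 by auto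
    hence "c ds * x \<le> c d0 * x" using x0 by (rule mult_right_mono)
    thus False using hs h0 s \<open>\<not> ds \<le> d0\<close> by simp
  qed
  have cm: "c ds + ds \<le> c d0 + d0" using c_id_mono le hs h0 by auto
  have cpos: "0 \<le> c ds - c d0" using c_anti le hs h0 by auto
  have "(c ds - c d0) * x \<le> (c ds - c d0) * 1" using cpos x by (intro mult_left_mono) auto
  moreover have "(c ds - c d0) * x = s - (d0 - ds)" using hs h0 by (simp add: left_diff_distrib)
  ultimately have e: "s / 2 \<le> d0 - ds" using cm by simp
  hence lt: "ds < d0" using s by simp
  have contc: "continuous_on {ds..d0} c" by (rule cont_sub[OF c_cont]) (use hs h0 in auto)
  have dif: "c differentiable (at y)" if "ds < y" "y < d0" for y
  proof -
    have "DERIV c y :> c' y" using deriv_interior[OF c_deriv[of y]] that hs h0 by auto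
    thus ?thesis using real_differentiable_def by blast
  qed
  obtain l z where z: "ds < z" "z < d0" "DERIV c z :> l" "c d0 - c ds = (d0 - ds) * l"
    using MVT[OF lt contc dif] by blast
  have "l = c' z" using DERIV_unique[OF z(3) deriv_interior[OF c_deriv[of z]]] z hs h0 by auto
  moreover have "c' z \<le> c' 1" using c'_mono[of z 1] z hs h0 by auto
  ultimately have "(d0 - ds) * (- c' 1) \<le> (d0 - ds) * (- l)" using lt by (intro mult_left_mono) auto
  moreover have "s / 2 * (- c' 1) \<le> (d0 - ds) * (- c' 1)"
    using e c'_neg[of 1] by (intro mult_right_mono) auto
  ultimately have "s / 2 * (- c' 1) \<le> c ds - c d0" using z(4) by (simp add: algebra_simps)
  thus ?thesis unfolding ds_def d0_def by (simp add: algebra_simps)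
qed


lemma part2: "\<exists>s. 0 < s \<and> s < st \<and> EU_S_F n F f c b m p s > EU_S_F n F f c b m p 0"
proof -
  define a where "a = (1::real) / 2"
  have a: "0 < a" "a < 1" by (auto simp: a_def)
  define \<kappa> where "\<kappa> = - c' 1"
  have kap: "\<kappa> > 0" unfolding \<kappa>_def using c'_neg[of 1] by auto
  define Q where "Q = 1 - F a ^ n"
  have Fa: "0 \<le> F a" "F a < 1" using F_range[of a] F_strict[of a 1] F1 a by auto
  have Q: "Q > 0"
  proof -
    have "F a ^ n < 1 ^ n" using Fa n2 by (intro power_strict_mono) auto
    thus ?thesis by (simp add: Q_def)
  qed
  define A0 where "A0 = \<kappa> * a"
  have A0: "A0 > 0" using kap a by (simp add: A0_def)
  define \<epsilon> where "\<epsilon> = A0 * Q / (4 * (1 + A0 * real n))"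
  have den: "0 < 4 * (1 + A0 * real n)" using A0 by (simp add: add_pos_nonneg)
  have eps: "\<epsilon> > 0" unfolding \<epsilon>_def using A0 Q den by (intro divide_pos_pos) auto
  obtain d3 where d3: "d3 > 0" "\<And>x. x \<in> {0..1} \<Longrightarrow> dist x 0 < d3 \<Longrightarrow> dist (F x) (F 0) < \<epsilon>"
    using F_cont eps unfolding continuous_on_iff by (metis atLeastAtMost_iff order_refl zero_le_one)
  obtain s where s: "0 < s" "s < st" "p s < min d3 a" using p_to_0[of "min d3 a"] d3 a by auto
  have sI: "s \<in> {0..1}" using s st by auto
  define P where "P = p s"
  have P: "0 < P" "P < a" "P < d3" "s \<le> P" "P \<le> 1" using s p_range[OF sI] by (auto simp: P_def)
  define t where "t = F P"
  have t: "0 \<le> t" "t < \<epsilon>" "t \<le> 1"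
  proof -
    show "0 \<le> t" "t \<le> 1" using F_range[of P] P by (auto simp: t_def)
    have "dist (F P) (F 0) < \<epsilon>" using d3(2)[of P] P by (auto simp: dist_real_def)
    thus "t < \<epsilon>" using F0 F_range[of P] P by (simp add: t_def dist_real_def)
  qed
  define E0 where "E0 x = c (m x 0)" for x
  define Es where "Es x = c (m x s - s)" for x
  have zI: "(0::real) \<in> {0..1}" by simp
  have E0int: "(\<lambda>x. E0 x * k x) integrable_on {0..1}"
    using E_int[OF zI, of 0 1] p0 by (simp add: E0_def)
  have Esint: "(\<lambda>x. Es x * k x) integrable_on {P..1}"
    using E_int[OF sI, of P 1] P by (simp add: Es_def P_def)
  define K0 where "K0 v = integral {0..v} (\<lambda>x. E0 x * k x)" for v
  define Ks where "Ks v = integral {P..v} (\<lambda>x. Es x * k x)" for v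
  define \<Phi> where "\<Phi> v = v * real n * f v * K0 v" for v
  define t1 where "t1 = F P ^ (n - 1)"
  define \<Psi> where "\<Psi> v = v * real n * f v * t1 + v * real n * f v * Ks v" for v
  define Is where "Is v = c (s - b v s) * v * W v" for v
  have K0c: "continuous_on {0..1} K0" unfolding K0_def by (rule indefinite_integral_continuous_1[OF E0int])
  have Ksc: "continuous_on {P..1} Ks" unfolding Ks_def by (rule indefinite_integral_continuous_1[OF Esint])
  have Phic: "continuous_on {0..1} \<Phi>" unfolding \<Phi>_def using f_cont K0c by (intro continuous_intros)
  have fcP: "continuous_on {P..1} f" by (rule cont_sub[OF f_cont]) (use P in auto)
  have Psic: "continuous_on {P..1} \<Psi>" unfolding \<Psi>_def using fcP Ksc by (intro continuous_intros)
  have Iscont: "continuous_on {0..P} Is"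
    unfolding Is_def using cont_cdelta[OF sI, of P] P sI cont_sub[OF W_cont, of 0 P]
    by (auto simp: P_def intro!: continuous_intros)
  have vWcont: "continuous_on {0..1} (\<lambda>v. v * W v)" using W_cont by (intro continuous_intros)
  have kP: "integral {0..P} k = t1" using k_integral[of 0 P] P F0 n2 by (simp add: t1_def)
  have EU0: "EU_S_F n F f c b m p 0 = integral {0..1} \<Phi>"
  proof -
    have "EU_S_F n F f c b m p 0 = integral {0..1} (\<lambda>v. integral {0..v} (\<lambda>x. E0 x * v * h_fn n F f v x))"
      unfolding EU_S_F_def p0 E0_def by (simp add: integral_pt)
    also have "\<dots> = integral {0..1} \<Phi>" unfolding \<Phi>_def K0_def by (simp only: inner_eq)
    finally show ?thesis .
  qed
  have EUs: "EU_S_F n F f c b m p s = integral {0..P} Is + integral {P..1} \<Psi>"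
  proof -
    have "(\<lambda>v. integral {0..P} (\<lambda>x. v * h_fn n F f v x) + integral {P..v} (\<lambda>x. c (m x s - s) * v * h_fn n F f v x)) = \<Psi>"
      by (rule ext) (simp only: inner_eq1 inner_eq kP \<Psi>_def Ks_def Es_def)
    moreover have "(\<lambda>v. c (s - b v s) * v * (real n * F v ^ (n - 1) * f v)) = Is"
      by (rule ext) (simp add: Is_def W_def)
    ultimately show ?thesis unfolding EU_S_F_def P_def by simp
  qed
  have split0: "integral {0..1} \<Phi> = integral {0..P} \<Phi> + integral {P..1} \<Phi>"
    by (rule int_split[OF Phic]) (use P in auto)
  have B1: "integral {0..P} \<Phi> \<le> integral {0..P} (\<lambda>v. v * W v)"
  proof (rule integral_le)
    show "\<Phi> integrable_on {0..P}" by (intro integrable_continuous_interval cont_sub[OF Phic]) (use P in auto)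
    show "(\<lambda>v. v * W v) integrable_on {0..P}" by (intro integrable_continuous_interval cont_sub[OF vWcont]) (use P in auto)
    fix v assume v: "v \<in> {0..P}"
    have v01: "0 \<le> v" "v \<le> 1" using v P by auto
    have "K0 v \<le> integral {0..v} k" unfolding K0_def
    proof (rule integral_le)
      show "(\<lambda>x. E0 x * k x) integrable_on {0..v}" using E0int by (rule integrable_subinterval_real) (use v01 in auto)
      show "k integrable_on {0..v}" by (intro integrable_continuous_interval cont_sub[OF k_cont]) (use v01 in auto)
      fix x assume x: "x \<in> {0..v}"
      have "E0 x \<le> 1" using E_le1[OF zI, of x] x v01 p0 by (simp add: E0_def)
      thus "E0 x * k x \<le> k x" using k_nonneg[of x] x v01 mult_right_mono[of "E0 x" 1 "k x"] by simp
    qed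
    also have "\<dots> = F v ^ (n - 1)" using k_integral[of 0 v] v01 F0 n2 by simp
    finally have "K0 v \<le> F v ^ (n - 1)" .
    moreover have "0 \<le> v * real n * f v" using v01 f_nonneg[of v] by simp
    ultimately have "v * real n * f v * K0 v \<le> v * real n * f v * F v ^ (n - 1)" by (rule mult_left_mono)
    thus "\<Phi> v \<le> v * W v" unfolding \<Phi>_def W_def by (simp add: algebra_simps)
  qed
  define T where "T v = v * real n * f v * (F v ^ (n - 1) - t1)" for v
  have Tc: "continuous_on {0..1} T" unfolding T_def using f_cont F_cont by (intro continuous_intros)
  have B2: "integral {P..1} \<Phi> \<le> integral {P..1} \<Psi> - (\<kappa> * s / 2) * integral {P..1} T"
  proof -
    have "integral {P..1} \<Phi> \<le> integral {P..1} (\<lambda>v. \<Psi> v - (\<kappa> * s / 2) * T v)"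
    proof (rule integral_le)
      show "\<Phi> integrable_on {P..1}" by (intro integrable_continuous_interval cont_sub[OF Phic]) (use P in auto)
      have "continuous_on {P..1} T" by (rule cont_sub[OF Tc]) (use P in auto)
      thus "(\<lambda>v. \<Psi> v - (\<kappa> * s / 2) * T v) integrable_on {P..1}"
        using Psic by (intro integrable_continuous_interval continuous_intros)
      fix v assume v: "v \<in> {P..1}"
      have v01: "0 \<le> v" "v \<le> 1" "P \<le> v" using v P by auto
      have Eint_v: "(\<lambda>x. E0 x * k x) integrable_on {0..v}" using E0int by (rule integrable_subinterval_real) (use v01 in auto)
      have "K0 v = integral {0..P} (\<lambda>x. E0 x * k x) + integral {P..v} (\<lambda>x. E0 x * k x)"
        unfolding K0_def using Henstock_Kurzweil_Integration.integral_combine[OF _ _ Eint_v, of P] P v01 by simp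
      moreover have "integral {0..P} (\<lambda>x. E0 x * k x) \<le> t1"
      proof -
        have "integral {0..P} (\<lambda>x. E0 x * k x) \<le> integral {0..P} k"
        proof (rule integral_le)
          show "(\<lambda>x. E0 x * k x) integrable_on {0..P}" using E0int by (rule integrable_subinterval_real) (use P in auto)
          show "k integrable_on {0..P}" by (intro integrable_continuous_interval cont_sub[OF k_cont]) (use P in auto)
          fix x assume x: "x \<in> {0..P}"
          have "E0 x \<le> 1" using E_le1[OF zI, of x] x P p0 by (simp add: E0_def)
          thus "E0 x * k x \<le> k x" using k_nonneg[of x] x P mult_right_mono[of "E0 x" 1 "k x"] by simp
        qed
        thus ?thesis using kP by simp
      qed
      moreover have "integral {P..v} (\<lambda>x. E0 x * k x) \<le> Ks v - (\<kappa> * s / 2) * (F v ^ (n - 1) - t1)"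
      proof -
        have kint: "k integrable_on {P..v}" by (intro integrable_continuous_interval cont_sub[OF k_cont]) (use P v01 in auto)
        have Esv: "(\<lambda>x. Es x * k x) integrable_on {P..v}" using Esint by (rule integrable_subinterval_real) (use v01 in auto)
        have "integral {P..v} (\<lambda>x. E0 x * k x) \<le> integral {P..v} (\<lambda>x. Es x * k x - (\<kappa> * s / 2) * k x)"
        proof (rule integral_le)
          show "(\<lambda>x. E0 x * k x) integrable_on {P..v}" using E0int by (rule integrable_subinterval_real) (use P v01 in auto)
          show "(\<lambda>x. Es x * k x - (\<kappa> * s / 2) * k x) integrable_on {P..v}"
            using integrable_diff[OF Esv integrable_on_cmult_left[OF kint, of "\<kappa> * s / 2"]] by simp
          fix x assume x: "x \<in> {P..v}"
          have "- c' 1 * s / 2 \<le> c (m x s - s) - c (m x 0 - 0)" using gain[of s x] s sI x v01 by (auto simp: P_def)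
          hence "E0 x \<le> Es x - \<kappa> * s / 2" by (simp add: E0_def Es_def \<kappa>_def)
          hence "E0 x * k x \<le> (Es x - \<kappa> * s / 2) * k x" using k_nonneg[of x] x P v01 by (intro mult_right_mono) auto
          thus "E0 x * k x \<le> Es x * k x - (\<kappa> * s / 2) * k x" by (simp add: algebra_simps)
        qed
        also have "\<dots> = Ks v - (\<kappa> * s / 2) * integral {P..v} k"
        proof -
          have "integral {P..v} (\<lambda>x. Es x * k x - (\<kappa> * s / 2) * k x)
             = integral {P..v} (\<lambda>x. Es x * k x) - integral {P..v} (\<lambda>x. (\<kappa> * s / 2) * k x)"
            using integrable_on_cmult_left[OF kint, of "\<kappa> * s / 2"]
            by (intro Henstock_Kurzweil_Integration.integral_diff[OF Esv]) simp
          also have "integral {P..v} (\<lambda>x. (\<kappa> * s / 2) * k x) = (\<kappa> * s / 2) * integral {P..v} k"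
            by (rule Henstock_Kurzweil_Integration.integral_mult_right)
          finally show ?thesis unfolding Ks_def .
        qed
        also have "integral {P..v} k = F v ^ (n - 1) - t1" using k_integral[of P v] P v01 by (simp add: t1_def)
        finally show ?thesis .
      qed
      ultimately have "K0 v \<le> t1 + Ks v - (\<kappa> * s / 2) * (F v ^ (n - 1) - t1)" by simp
      moreover have "0 \<le> v * real n * f v" using v01 f_nonneg[of v] by simp
      ultimately have "v * real n * f v * K0 v \<le> v * real n * f v * (t1 + Ks v - (\<kappa> * s / 2) * (F v ^ (n - 1) - t1))"
        by (rule mult_left_mono)
      thus "\<Phi> v \<le> \<Psi> v - (\<kappa> * s / 2) * T v" unfolding \<Phi>_def \<Psi>_def T_def by (simp add: algebra_simps)
    qed
    also have "\<dots> = integral {P..1} \<Psi> - (\<kappa> * s / 2) * integral {P..1} T"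
    proof -
      have "\<Psi> integrable_on {P..1}" using Psic by (rule integrable_continuous_interval)
      moreover have "T integrable_on {P..1}" by (intro integrable_continuous_interval cont_sub[OF Tc]) (use P in auto)
      ultimately have "integral {P..1} (\<lambda>v. \<Psi> v - (\<kappa> * s / 2) * T v) = integral {P..1} \<Psi> - integral {P..1} (\<lambda>v. (\<kappa> * s / 2) * T v)"
        using integrable_on_cmult_left[of T "{P..1}" "\<kappa> * s / 2"] by (intro Henstock_Kurzweil_Integration.integral_diff) simp_all
      thus ?thesis by simp
    qed
    finally show ?thesis .
  qed
  have B3: "integral {0..P} (\<lambda>v. v * W v) - s * F P ^ n \<le> integral {0..P} Is"
  proof -
    have "integral {0..P} (\<lambda>v. v * W v - s * W v) \<le> integral {0..P} Is"
    proof (rule integral_le)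
      show "Is integrable_on {0..P}" using Iscont by (rule integrable_continuous_interval)
      have "continuous_on {0..P} (\<lambda>v. v * W v - s * W v)"
        using cont_sub[OF W_cont, of 0 P] P by (auto intro!: continuous_intros)
      thus "(\<lambda>v. v * W v - s * W v) integrable_on {0..P}" by (rule integrable_continuous_interval)
      fix v assume v: "v \<in> {0..P}"
      have v01: "0 \<le> v" "v \<le> 1" "v \<le> p s" using v P by (auto simp: P_def)
      have dl: "0 \<le> s - b v s" "s - b v s \<le> s" using delta_in[OF sI, of v] b_nonneg[OF sI, of v] v01 by auto
      have "1 - s \<le> c (s - b v s)" using c_ge[of "s - b v s"] dl sI by auto
      moreover have W0: "0 \<le> W v" using W_nonneg v01 by auto
      ultimately have "(1 - s) * (v * W v) \<le> c (s - b v s) * (v * W v)" using v01 by (intro mult_right_mono) auto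
      moreover have "s * (v * W v) \<le> s * W v" using W0 v01 sI by (intro mult_left_mono) (auto simp: mult_left_le_one_le)
      ultimately show "v * W v - s * W v \<le> Is v" unfolding Is_def by (simp add: algebra_simps)
    qed
    moreover have "integral {0..P} (\<lambda>v. v * W v - s * W v) = integral {0..P} (\<lambda>v. v * W v) - s * F P ^ n"
    proof -
      have "(\<lambda>v. v * W v) integrable_on {0..P}" by (intro integrable_continuous_interval cont_sub[OF vWcont]) (use P in auto)
      moreover have "W integrable_on {0..P}" by (intro integrable_continuous_interval cont_sub[OF W_cont]) (use P in auto)
      ultimately have "integral {0..P} (\<lambda>v. v * W v - s * W v) = integral {0..P} (\<lambda>v. v * W v) - integral {0..P} (\<lambda>v. s * W v)"
        using integrable_on_cmult_left[of W "{0..P}" s] by (intro Henstock_Kurzweil_Integration.integral_diff) simp_all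
      hence "integral {0..P} (\<lambda>v. v * W v - s * W v) = integral {0..P} (\<lambda>v. v * W v) - s * integral {0..P} W" by simp
      moreover have "integral {0..P} W = F P ^ n" using integral_unique[OF W_int[of 0 P]] P F0 n2 by simp
      ultimately show ?thesis by simp
    qed
    ultimately show ?thesis by simp
  qed
  have B4: "a * (Q - real n * t1 * (1 - F a)) \<le> integral {P..1} T"
  proof -
    have "integral {P..1} T = integral {P..a} T + integral {a..1} T" by (rule int_split[OF Tc]) (use P a in auto)
    moreover have "0 \<le> integral {P..a} T"
    proof (rule integral_nonneg_any)
      fix v assume v: "v \<in> {P..a}"
      have "t1 \<le> F v ^ (n - 1)" unfolding t1_def using F_le[of P v] F_range[of P] v P a by (intro power_mono) auto
      thus "0 \<le> T v" unfolding T_def using f_nonneg[of v] v P a by auto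
    qed
    moreover have "a * (Q - real n * t1 * (1 - F a)) \<le> integral {a..1} T"
    proof -
      have fint: "(f has_integral (F 1 - F a)) {a..1}" using Fpow_int[of a 1 1] a by simp
      have Wint: "(W has_integral (1 - F a ^ n)) {a..1}" using W_int[of a 1] a F1 by simp
      have "((\<lambda>v. a * (W v - real n * t1 * f v)) has_integral a * ((1 - F a ^ n) - real n * t1 * (F 1 - F a))) {a..1}"
      proof -
        have i1: "((\<lambda>v. real n * t1 * f v) has_integral (real n * t1 * (F 1 - F a))) {a..1}"
          by (rule has_integral_mult_right[OF fint])
        have i2: "((\<lambda>v. W v - real n * t1 * f v) has_integral ((1 - F a ^ n) - real n * t1 * (F 1 - F a))) {a..1}"
          by (rule has_integral_diff[OF Wint i1])
        show ?thesis by (rule has_integral_mult_right[OF i2])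
      qed
      moreover have "(T has_integral integral {a..1} T) {a..1}"
      proof (rule integrable_integral, rule integrable_subinterval_real[OF integrable_continuous_interval[OF Tc]])
        have "0 \<le> a" using a(1) by linarith
        thus "{a..1} \<subseteq> {0..1}" unfolding atLeastatMost_subset_iff by (intro disjI2 conjI order_refl)
      qed
      ultimately have "a * ((1 - F a ^ n) - real n * t1 * (F 1 - F a)) \<le> integral {a..1} T"
      proof (rule has_integral_le[where f="\<lambda>v. a * (W v - real n * t1 * f v)" and g=T and S="{a..1}"])
        fix v assume v: "v \<in> {a..1}"
        have v01: "0 \<le> v" "v \<le> 1" "a \<le> v" using v a by auto
        have "t1 \<le> F v ^ (n - 1)" unfolding t1_def using F_le[of P v] F_range[of P] v01 P a by (intro power_mono) auto
        hence br: "0 \<le> real n * f v * (F v ^ (n - 1) - t1)" using f_nonneg[of v] v01 by auto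
        have "a * (real n * f v * (F v ^ (n - 1) - t1)) \<le> v * (real n * f v * (F v ^ (n - 1) - t1))"
          using br v01 by (intro mult_right_mono) auto
        thus "a * (W v - real n * t1 * f v) \<le> T v" unfolding T_def W_def by (simp add: algebra_simps)
      qed
      thus ?thesis using F1 by (simp add: Q_def)
    qed
    ultimately show ?thesis by simp
  qed
  have diff: "EU_S_F n F f c b m p s - EU_S_F n F f c b m p 0 \<ge> (\<kappa> * s / 2) * (a * (Q - real n * t1 * (1 - F a))) - s * F P ^ n"
  proof -
    have "(\<kappa> * s / 2) * (a * (Q - real n * t1 * (1 - F a))) \<le> (\<kappa> * s / 2) * integral {P..1} T"
      using B4 kap s by (intro mult_left_mono) auto
    thus ?thesis using EU0 EUs split0 B1 B2 B3 by simp
  qed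
  have tn: "F P ^ n \<le> t" using power_decreasing[of 1 n t] t n2 by (simp add: t_def)
  have t1t: "t1 \<le> t" using power_decreasing[of 1 "n - 1" t] t n2 by (simp add: t_def t1_def)
  have t10: "0 \<le> t1" using t by (simp add: t1_def t_def)
  have "t1 * (1 - F a) \<le> t1" using Fa t10 by (simp add: mult_left_le)
  hence "real n * (t1 * (1 - F a)) \<le> real n * t" using t1t by (intro mult_left_mono) auto
  hence q1: "Q - real n * t \<le> Q - real n * t1 * (1 - F a)" by (simp add: mult.assoc)
  have "t * (4 * (1 + A0 * real n)) < A0 * Q"
    using t(2) den unfolding \<epsilon>_def by (simp add: pos_less_divide_eq)
  hence q2: "4 * t + 4 * (A0 * (real n * t)) < A0 * Q" by (simp add: algebra_simps)
  have q3: "0 \<le> A0 * (real n * t)" using A0 t by simp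
  have pos: "0 < A0 / 2 * (Q - real n * t) - t"
  proof -
    have "A0 / 2 * (Q - real n * t) = A0 * Q / 2 - A0 * (real n * t) / 2" by (simp add: algebra_simps)
    thus ?thesis using q2 q3 t(1) by linarith
  qed
  have "A0 / 2 * (Q - real n * t) \<le> A0 / 2 * (Q - real n * t1 * (1 - F a))"
    using q1 A0 by (intro mult_left_mono) auto
  hence "0 < A0 / 2 * (Q - real n * t1 * (1 - F a)) - t" using pos by linarith
  hence "0 < s * (A0 / 2 * (Q - real n * t1 * (1 - F a)) - t)" using s by simp
  moreover have "s * (A0 / 2 * (Q - real n * t1 * (1 - F a)) - t) \<le>
      (\<kappa> * s / 2) * (a * (Q - real n * t1 * (1 - F a))) - s * F P ^ n"
  proof -
    have "s * F P ^ n \<le> s * t" using tn s by (intro mult_left_mono) auto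
    moreover have "(\<kappa> * s / 2) * (a * (Q - real n * t1 * (1 - F a))) = s * (A0 / 2 * (Q - real n * t1 * (1 - F a)))"
      by (simp add: A0_def algebra_simps)
    ultimately show ?thesis by (simp add: right_diff_distrib)
  qed
  ultimately show ?thesis using diff s by (intro exI[of _ s]) auto
qed

lemma main: "\<exists>s_hat \<in> {0<..<st}.
           EU_S_F n F f c b m p s_hat > max (EU_S_F n F f c b m p 1) (EU_S_F n F f c b m p 0)"
proof (cases "EU_S_F n F f c b m p 1 \<le> EU_S_F n F f c b m p 0")
  case True
  then obtain s where "0 < s" "s < st" "EU_S_F n F f c b m p s > EU_S_F n F f c b m p 0" using part2 by blast
  thus ?thesis using True by (intro bexI[of _ s]) auto
next
  case False
  then obtain s where "0 < s" "s < st" "EU_S_F n F f c b m p s > EU_S_F n F f c b m p 1" using part1 by blast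
  thus ?thesis using False by (intro bexI[of _ s]) auto
qed

end

theorem proposition4:
  fixes n :: nat
    and F f f' :: "real \<Rightarrow> real"
    and c c' c'' :: "real \<Rightarrow> real"
    and b m :: "real \<Rightarrow> real \<Rightarrow> real"
    and p :: "real \<Rightarrow> real"
    and s_tilde :: real
  assumes n2: "n \<ge> 2"
    \<comment> \<open>F is a twice differentiable CDF on [0,1] with density f\<close>
    and F0: "F 0 = 0" and F1: "F 1 = 1"
    and F_mono: "mono_on {0..1} F"
    and f_nonneg: "\<And>x. x \<in> {0..1} \<Longrightarrow> f x \<ge> 0"
    and F_deriv: "\<And>x. x \<in> {0..1} \<Longrightarrow> (F has_real_derivative f x) (at x within {0..1})"
    and f_deriv: "\<And>x. x \<in> {0..1} \<Longrightarrow> (f has_real_derivative f' x) (at x within {0..1})"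
    \<comment> \<open>time cost c : [0,1] \<rightarrow> R+, twice differentiable, c 0 = 1, c' > -1\<close>
    and c_nonneg: "\<And>t. t \<in> {0..1} \<Longrightarrow> c t \<ge> 0"
    and c_deriv: "\<And>t. t \<in> {0..1} \<Longrightarrow> (c has_real_derivative c' t) (at t within {0..1})"
    and c'_deriv: "\<And>t. t \<in> {0..1} \<Longrightarrow> (c' has_real_derivative c'' t) (at t within {0..1})"
    and c0: "c 0 = 1"
    and c'_gt: "\<And>t. t \<in> {0..1} \<Longrightarrow> c' t > -1"
    \<comment> \<open>equilibrium cutoff p\<close>
    and p_range: "\<And>s. s \<in> {0..1} \<Longrightarrow> s \<le> p s \<and> p s \<le> 1"
    \<comment> \<open>English phase drop-out price m\<close>
    and m_range: "\<And>s v. s \<in> {0..1} \<Longrightarrow> v \<in> {p s..1} \<Longrightarrow> s \<le> m v s \<and> m v s - s \<le> 1"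
    and m_eq: "\<And>s v. s \<in> {0..1} \<Longrightarrow> v \<in> {p s..1} \<Longrightarrow> c (m v s - s) * v - m v s = 0"
    \<comment> \<open>Dutch phase bid b: strictly increasing solution of the ODE with b(0,s) = 0\<close>
    and b_cont: "\<And>s. s \<in> {0..1} \<Longrightarrow> continuous_on {0..p s} (\<lambda>v. b v s)"
    and b_strict: "\<And>s. s \<in> {0..1} \<Longrightarrow> strict_mono_on {0..p s} (\<lambda>v. b v s)"
    and b_zero: "\<And>s. s \<in> {0..1} \<Longrightarrow> b 0 s = 0"
    and b_le: "\<And>s v. s \<in> {0..1} \<Longrightarrow> v \<in> {0..p s} \<Longrightarrow> b v s \<le> s"
    and b_ode: "\<And>s v. s \<in> {0..1} \<Longrightarrow> v \<in> {0<..<p s} \<Longrightarrow>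
       ((\<lambda>w. b w s) has_real_derivative
          (g_fn n F f v / G_fn n F v) * ((c (s - b v s) * v - b v s) / (1 + c' (s - b v s) * v)))
       (at v)"
    and b_cut: "\<And>s. s \<in> {0..1} \<Longrightarrow> p s < 1 \<Longrightarrow> b (p s) s = s"
    \<comment> \<open>threshold s_tilde\<close>
    and s_tilde: "0 < s_tilde" "s_tilde < 1"
    and p_lt: "\<And>s. s \<in> {0..<s_tilde} \<Longrightarrow> p s < 1"
    and p_mono: "mono_on {0..<s_tilde} p"
    and p_one: "\<And>s. s \<in> {s_tilde..1} \<Longrightarrow> p s = 1"
    \<comment> \<open>hypotheses of the proposition\<close>
    and c'_neg: "\<And>t. t \<in> {0..1} \<Longrightarrow> c' t < 0"
    and c''_nonneg: "\<And>t. t \<in> {0..1} \<Longrightarrow> c'' t \<ge> 0"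
  shows "\<exists>s_hat \<in> {0<..<s_tilde}.
           EU_S_F n F f c b m p s_hat > max (EU_S_F n F f c b m p 1) (EU_S_F n F f c b m p 0)"
  proof -
  have "IFA n F f f' c c' c'' b m p s_tilde"
    apply (rule IFA.intro)
    apply (fact assms)+
    done
  from IFA.main[OF this] show ?thesis .
qed

end
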